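(* Let $G=(V,E)$ be a Generalized Bartlett graph on $V=\{1,\dots,r\}$ for which the ordering by labels is a Generalized Bartlett ordering. Let $0=p_0<p_1<\dots<p_r$ be integers and for each $i$ let $G_i=(V_i,E_i)$ be a Generalized Bartlett graph on $V_i=\{p_{i-1}+1,\dots,p_i\}$ for which the ordering by labels is a Generalized Bartlett ordering. Define the expanded graph $\widetilde G=(\widetilde V,\widetilde E)$ by $\widetilde V=V_1\cup\dots\cup V_r=\{1,\dots,p_r\}$ and $\{k,l\}\in\widetilde E$ iff either $\{k,l\}\in E_i$ for some $i$, or $k=p_i$, $l=p_j$ for some $i\ne j$ with $\{i,j\}\in E$. Then $\widetilde G$ is a Generalized Bartlett graph.
   Context: For a graph $H=(W,F)$ with $|W|=m$ and an ordering $\sigma:W\to\{1,\dots,m\}$ (bijection), define $F^\sigma_0=F$ and for $i=1,\dots,m-2$, $F^\sigma_i=F^\sigma_{i-1}\cup\{\{u,v\}:u\ne v,\sigma(u)>i,\sigma(v)>i,\{u,\sigma^{-1}(i)\},\{v,\sigma^{-1}(i)\}\in F^\sigma_{i-1}\}$; let $D^\sigma(F)=F^\sigma_{m-2}$. $\sigma$ is a Generalized Bartlett ordering of $H$ if there are no $u,v,w\in W$ with $\{u,v\},\{v,w\},\{u,w\}\notin F$ but all three in $D^\sigma(F)$; $H$ is a Generalized Bartlett graph if such an ordering exists. For a graph on a set of integers, "the ordering by labels" means the order-preserving bijection onto $\{1,\dots,m\}$. *)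

theory Defs
  imports Main
begin

definition simple_graph :: "'a set \<Rightarrow> 'a set set \<Rightarrow> bool" where
  "simple_graph W F \<longleftrightarrow> finite W \<and>
     (\<forall>e\<in>F. \<exists>u v. u \<noteq> v \<and> u \<in> W \<and> v \<in> W \<and> e = {u, v})"

definition fill_step :: "'a set \<Rightarrow> ('a \<Rightarrow> nat) \<Rightarrow> nat \<Rightarrow> 'a set set \<Rightarrow> 'a set set" where
  "fill_step W \<sigma> i F = F \<union> {{u, v} | u v. u \<in> W \<and> v \<in> W \<and> u \<noteq> v \<and> \<sigma> u > i \<and> \<sigma> v > i \<and>
       {u, inv_into W \<sigma> i} \<in> F \<and> {v, inv_into W \<sigma> i} \<in> F}"

fun fill_seq :: "'a set \<Rightarrow> ('a \<Rightarrow> nat) \<Rightarrow> 'a set set \<Rightarrow> nat \<Rightarrow> 'a set set" where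
  "fill_seq W \<sigma> F 0 = F"
| "fill_seq W \<sigma> F (Suc i) = fill_step W \<sigma> (Suc i) (fill_seq W \<sigma> F i)"

definition fillD :: "'a set \<Rightarrow> ('a \<Rightarrow> nat) \<Rightarrow> 'a set set \<Rightarrow> 'a set set" where
  "fillD W \<sigma> F = fill_seq W \<sigma> F (card W - 2)"

definition GB_ordering :: "'a set \<Rightarrow> 'a set set \<Rightarrow> ('a \<Rightarrow> nat) \<Rightarrow> bool" where
  "GB_ordering W F \<sigma> \<longleftrightarrow> bij_betw \<sigma> W {1..card W} \<and>
     \<not> (\<exists>u\<in>W. \<exists>v\<in>W. \<exists>w\<in>W. {u,v} \<notin> F \<and> {v,w} \<notin> F \<and> {u,w} \<notin> F \<and>
          {u,v} \<in> fillD W \<sigma> F \<and> {v,w} \<in> fillD W \<sigma> F \<and> {u,w} \<in> fillD W \<sigma> F)"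

definition GB_graph :: "'a set \<Rightarrow> 'a set set \<Rightarrow> bool" where
  "GB_graph W F \<longleftrightarrow> simple_graph W F \<and> (\<exists>\<sigma>. GB_ordering W F \<sigma>)"

text \<open>The ordering by labels: order-preserving bijection of a finite set of naturals onto {1..m}.\<close>
definition label_ord :: "nat set \<Rightarrow> nat \<Rightarrow> nat" where
  "label_ord W x = card {y \<in> W. y \<le> x}"

definition expanded_edges :: "nat \<Rightarrow> nat set set \<Rightarrow> (nat \<Rightarrow> nat) \<Rightarrow> (nat \<Rightarrow> nat set set) \<Rightarrow> nat set set" where
  "expanded_edges r E p Es =
     {e. (\<exists>i\<in>{1..r}. e \<in> Es i) \<or> (\<exists>i j. i \<noteq> j \<and> {i, j} \<in> E \<and> e = {p i, p j})}"

end

theory Submission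
  imports Defs
begin
lemma fill_stepD: "e \<in> fill_step W \<sigma> i F \<Longrightarrow> e \<in> F \<or> (\<exists>u v. e = {u,v} \<and> u\<in>W \<and> v\<in>W \<and> u\<noteq>v \<and> \<sigma> u > i \<and> \<sigma> v > i \<and> {u, inv_into W \<sigma> i}\<in>F \<and> {v, inv_into W \<sigma> i} \<in> F)"
  unfolding fill_step_def by auto
lemma fill_stepI:
  "u \<in> W \<Longrightarrow> v \<in> W \<Longrightarrow> u \<noteq> v \<Longrightarrow> \<sigma> u > i \<Longrightarrow> \<sigma> v > i \<Longrightarrow>
   {u, inv_into W \<sigma> i} \<in> F \<Longrightarrow> {v, inv_into W \<sigma> i} \<in> F \<Longrightarrow> {u,v} \<in> fill_step W \<sigma> i F"
  unfolding fill_step_def by auto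
lemma fill_seq_mono: "m \<le> n \<Longrightarrow> fill_seq W \<sigma> F m \<subseteq> fill_seq W \<sigma> F n"
  by (induction n) (auto simp: fill_step_def le_Suc_eq)

lemma fill_seq_stable:
  "e \<in> fill_seq W \<sigma> F n \<Longrightarrow> y \<in> e \<Longrightarrow> e \<in> fill_seq W \<sigma> F (min n (\<sigma> y - 1))"
proof (induction n)
  case 0
  then show ?case by simp
next
  case (Suc n)
  show ?case
  proof (cases "e \<in> fill_seq W \<sigma> F n")
    case True
    then have "e \<in> fill_seq W \<sigma> F (min n (\<sigma> y - 1))" using Suc.IH Suc.prems(2) by blast
    moreover have "fill_seq W \<sigma> F (min n (\<sigma> y - 1)) \<subseteq> fill_seq W \<sigma> F (min (Suc n) (\<sigma> y - 1))"
      by (rule fill_seq_mono) simp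
    ultimately show ?thesis by (rule subsetD[rotated])
  next
    case False
    then obtain u v where "e = {u,v}" "\<sigma> u > Suc n" "\<sigma> v > Suc n"
      using fill_stepD[of e W \<sigma> "Suc n" "fill_seq W \<sigma> F n"] Suc.prems(1) by auto
    then have "\<sigma> y > Suc n" using Suc.prems(2) by auto
    then have "min (Suc n) (\<sigma> y - 1) = Suc n" by simp
    then show ?thesis using Suc.prems(1) by (simp only:)
  qed
qed

lemma fill_seq_simple:
  "simple_graph W F \<Longrightarrow> e \<in> fill_seq W \<sigma> F n \<Longrightarrow> \<exists>u v. u \<noteq> v \<and> u \<in> W \<and> v \<in> W \<and> e = {u, v}"
proof (induction n arbitrary: e)
  case 0
  then show ?case unfolding simple_graph_def by simp
next
  case (Suc n)
  then show ?case using fill_stepD[of e W \<sigma> "Suc n" "fill_seq W \<sigma> F n"] by auto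
qed

lemma fill_closed:
  assumes bij: "bij_betw \<sigma> W {1..card W}"
    and x: "x \<in> W" and u: "u \<in> W" and v: "v \<in> W" and uv: "u \<noteq> v"
    and su: "\<sigma> u > \<sigma> x" and sv: "\<sigma> v > \<sigma> x"
    and eu: "{u,x} \<in> fillD W \<sigma> F" and ev: "{v,x} \<in> fillD W \<sigma> F"
  shows "{u,v} \<in> fillD W \<sigma> F"
proof -
  have inj: "inj_on \<sigma> W" using bij by (rule bij_betw_imp_inj_on)
  have rng: "\<sigma> y \<in> {1..card W}" if "y \<in> W" for y using bij_betw_apply[OF bij that] .
  have k1: "\<sigma> x \<ge> 1" using rng[OF x] by simp
  obtain j where kj: "\<sigma> x = Suc j" using k1 not0_implies_Suc by fastforce
  show ?thesis
  proof (cases "\<sigma> x \<le> card W - 2")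
    case True
    have mj: "min (card W - 2) (\<sigma> x - 1) = j" using True unfolding kj by simp
    have a: "{u,x} \<in> fill_seq W \<sigma> F j"
      using fill_seq_stable[of "{u,x}" W \<sigma> F "card W - 2" x] eu mj
      unfolding fillD_def by simp
    have b: "{v,x} \<in> fill_seq W \<sigma> F j"
      using fill_seq_stable[of "{v,x}" W \<sigma> F "card W - 2" x] ev mj
      unfolding fillD_def by simp
    have ix: "inv_into W \<sigma> (Suc j) = x" using inv_into_f_f[OF inj x] kj by simp
    have sk: "Suc j < \<sigma> u" "Suc j < \<sigma> v" using su sv kj by auto
    have "{u,v} \<in> fill_step W \<sigma> (Suc j) (fill_seq W \<sigma> F j)"
      apply (rule fill_stepI[OF u v uv sk])
      using a b ix by auto
    then have "{u,v} \<in> fill_seq W \<sigma> F (\<sigma> x)" unfolding kj by simp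
    moreover have "fill_seq W \<sigma> F (\<sigma> x) \<subseteq> fillD W \<sigma> F"
      unfolding fillD_def by (rule fill_seq_mono[OF True])
    ultimately show ?thesis by blast
  next
    case False
    have "\<sigma> u \<le> card W" "\<sigma> v \<le> card W" using rng u v by auto
    then have "\<sigma> u = \<sigma> v" using False su sv by linarith
    then have "u = v" using inj u v inj_on_eq_iff by metis
    then show ?thesis using uv by simp
  qed
qed

lemma label_ord_interval:
  assumes "x \<in> {a+1..b::nat}" shows "label_ord {a+1..b} x = x - a"
proof -
  have "{y \<in> {a+1..b}. y \<le> x} = {a+1..x}" using assms by auto
  then show ?thesis by (simp add: label_ord_def)
qed

lemma inv_into_id: "x \<in> A \<Longrightarrow> inv_into A id x = x"
  by (metis id_apply inj_on_id inv_into_f_f)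


locale expd =
  fixes r :: nat and E :: "nat set set" and p :: "nat \<Rightarrow> nat" and Es :: "nat \<Rightarrow> nat set set"
  assumes G: "GB_graph {1..r} E"
    and G_ord: "GB_ordering {1..r} E (label_ord {1..r})"
    and p0: "p 0 = 0"
    and p_mono: "\<And>i. i < r \<Longrightarrow> p i < p (Suc i)"
    and Gi: "\<And>i. i \<in> {1..r} \<Longrightarrow> GB_graph {p (i - 1) + 1..p i} (Es i)"
    and Gi_ord: "\<And>i. i \<in> {1..r} \<Longrightarrow>
                   GB_ordering {p (i - 1) + 1..p i} (Es i) (label_ord {p (i - 1) + 1..p i})"
begin

definition V :: "nat \<Rightarrow> nat set" where "V i = {p (i - 1) + 1..p i}"
definition D :: "nat \<Rightarrow> nat set set" where "D i = fillD (V i) (label_ord (V i)) (Es i)"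
definition DG :: "nat set set" where "DG = fillD {1..r} (label_ord {1..r}) E"
definition Ports :: "nat set set" where
  "Ports = {{p a, p b} | a b. a \<in> {1..r} \<and> b \<in> {1..r} \<and> a \<noteq> b \<and> {a,b} \<in> DG}"
definition B :: "nat set set" where "B = (\<Union>i\<in>{1..r}. D i) \<union> Ports"
definition Ft :: "nat set set" where "Ft = expanded_edges r E p Es"

lemma pmono: "i < j \<Longrightarrow> j \<le> r \<Longrightarrow> p i < p j"
proof (induction j)
  case 0
  then show ?case by simp
next
  case (Suc j)
  have pj: "p j < p (Suc j)" using Suc.prems p_mono by simp
  show ?case
  proof (cases "i = j")
    case True
    then show ?thesis using pj by simp
  next
    case False
    then have "i < j" using Suc.prems by simp
    then have "p i < p j" using Suc.IH Suc.prems by simp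
    then show ?thesis using pj by simp
  qed
qed

lemma pmono_le: "i \<le> j \<Longrightarrow> j \<le> r \<Longrightarrow> p i \<le> p j"
  using pmono[of i j] by (cases "i = j") auto

lemma pinj: "a \<le> r \<Longrightarrow> b \<le> r \<Longrightarrow> p a = p b \<Longrightarrow> a = b"
  using pmono[of a b] pmono[of b a] by (cases a b rule: linorder_cases) auto

lemma ppos: "a \<in> {1..r} \<Longrightarrow> p a \<in> {1..p r}"
  using pmono[of 0 a] pmono_le[of a r] p0 by auto

lemma Vsub: "i \<in> {1..r} \<Longrightarrow> V i \<subseteq> {1..p r}"
  using pmono_le[of i r] unfolding V_def by auto

lemma Vmax: "x \<in> V i \<Longrightarrow> x \<le> p i" unfolding V_def by simp

lemma port_in: "a \<in> {1..r} \<Longrightarrow> i \<in> {1..r} \<Longrightarrow> p a \<in> V i \<Longrightarrow> a = i"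
proof -
  assume a: "a \<in> {1..r}" and i: "i \<in> {1..r}" and pa: "p a \<in> V i"
  have l: "p (i - 1) < p a" and h: "p a \<le> p i" using pa unfolding V_def by auto
  have "\<not> a < i"
  proof
    assume "a < i"
    then have "p a \<le> p (i - 1)" using pmono_le[of a "i - 1"] i by auto
    then show False using l by simp
  qed
  moreover have "\<not> i < a"
  proof
    assume "i < a"
    then have "p i < p a" using pmono a by auto
    then show False using h by simp
  qed
  ultimately show "a = i" by simp
qed

lemma Vdisj: "i \<in> {1..r} \<Longrightarrow> j \<in> {1..r} \<Longrightarrow> x \<in> V i \<Longrightarrow> x \<in> V j \<Longrightarrow> i = j"
proof -
  have *: "False" if "i \<in> {1..r}" "j \<in> {1..r}" "x \<in> V i" "x \<in> V j" "i < j" for i j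
  proof -
    have "p i \<le> p (j - 1)" using pmono_le[of i "j - 1"] that by auto
    moreover have "p (j - 1) < x" "x \<le> p i" using that unfolding V_def by auto
    ultimately show False by simp
  qed
  show "i \<in> {1..r} \<Longrightarrow> j \<in> {1..r} \<Longrightarrow> x \<in> V i \<Longrightarrow> x \<in> V j \<Longrightarrow> i = j"
    using *[of i j] *[of j i] by (cases i j rule: linorder_cases) auto
qed

lemma Vlab: "x \<in> V i \<Longrightarrow> label_ord (V i) x = x - p (i - 1)"
  unfolding V_def by (rule label_ord_interval)

lemma Glab: "x \<in> {1..r} \<Longrightarrow> label_ord {1..r} x = x"
  using label_ord_interval[of x 0 r] by simp

lemma Vsimple: "i \<in> {1..r} \<Longrightarrow> simple_graph (V i) (Es i)"
  using Gi unfolding V_def GB_graph_def by blast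

lemma Vord: "i \<in> {1..r} \<Longrightarrow> GB_ordering (V i) (Es i) (label_ord (V i))"
  using Gi_ord unfolding V_def by blast

lemma Vbij: "i \<in> {1..r} \<Longrightarrow> bij_betw (label_ord (V i)) (V i) {1..card (V i)}"
  using Vord unfolding GB_ordering_def by blast

lemma Gbij: "bij_betw (label_ord {1..r}) {1..r} {1..card {1..r}}"
  using G_ord unfolding GB_ordering_def by blast

lemma Gsimple: "simple_graph {1..r} E"
  using G unfolding GB_graph_def by blast

lemma D_sub: "i \<in> {1..r} \<Longrightarrow> e \<in> D i \<Longrightarrow> \<exists>u v. u \<noteq> v \<and> u \<in> V i \<and> v \<in> V i \<and> e = {u, v}"
  unfolding D_def fillD_def using fill_seq_simple Vsimple by blast

lemma DG_sub: "e \<in> DG \<Longrightarrow> \<exists>u v. u \<noteq> v \<and> u \<in> {1..r} \<and> v \<in> {1..r} \<and> e = {u, v}"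
  unfolding DG_def fillD_def using fill_seq_simple Gsimple by blast

lemma Ports_E: "{x,y} \<in> Ports \<Longrightarrow>
   \<exists>a b. a \<in> {1..r} \<and> b \<in> {1..r} \<and> a \<noteq> b \<and> {a,b} \<in> DG \<and> x = p a \<and> y = p b"
proof -
  assume "{x,y} \<in> Ports"
  then obtain a b where ab: "a \<in> {1..r}" "b \<in> {1..r}" "a \<noteq> b" "{a,b} \<in> DG" "{x,y} = {p a, p b}"
    unfolding Ports_def by blast
  from ab(5) have "(x = p a \<and> y = p b) \<or> (x = p b \<and> y = p a)" by (simp add: doubleton_eq_iff)
  then show ?thesis
  proof
    assume "x = p a \<and> y = p b" then show ?thesis using ab by blast
  next
    assume "x = p b \<and> y = p a" then show ?thesis using ab insert_commute[of a b "{}"] by metis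
  qed
qed

lemma B_cases: "{x,y} \<in> B \<Longrightarrow>
   (\<exists>i\<in>{1..r}. {x,y} \<in> D i \<and> x \<in> V i \<and> y \<in> V i) \<or>
   (\<exists>a b. a \<in> {1..r} \<and> b \<in> {1..r} \<and> a \<noteq> b \<and> {a,b} \<in> DG \<and> x = p a \<and> y = p b)"
proof -
  assume "{x,y} \<in> B"
  then consider (d) i where "i \<in> {1..r}" "{x,y} \<in> D i" | (q) "{x,y} \<in> Ports"
    unfolding B_def by blast
  then show ?thesis
  proof cases
    case d
    then obtain u v where "u \<in> V i" "v \<in> V i" "{x,y} = {u,v}" using D_sub by blast
    then have "x \<in> V i" "y \<in> V i" by (auto simp: doubleton_eq_iff)
    then show ?thesis using d by blast
  next
    case q
    then show ?thesis using Ports_E by blast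
  qed
qed

lemma Bdist: "{x,y} \<in> B \<Longrightarrow> x \<noteq> y"
proof -
  assume "{x,y} \<in> B"
  then consider (d) i where "i \<in> {1..r}" "{x,y} \<in> D i" | (q) "{x,y} \<in> Ports"
    unfolding B_def by blast
  then show ?thesis
  proof cases
    case d
    then obtain u v where "u \<noteq> v" "{x,y} = {u,v}" using D_sub by blast
    then show ?thesis by (auto simp: doubleton_eq_iff)
  next
    case q
    then obtain a b where "a \<in> {1..r}" "b \<in> {1..r}" "a \<noteq> b" "x = p a" "y = p b"
      using Ports_E by blast
    then show ?thesis using pinj by auto
  qed
qed

end

context expd begin

lemma Bclosed:
  assumes uv: "u \<noteq> v" and ku: "k < u" and kv: "k < v" and eu: "{u,k} \<in> B" and ev: "{v,k} \<in> B"
  shows "{u,v} \<in> B"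
proof -
  consider (dd) i j where "i \<in> {1..r}" "{u,k} \<in> D i" "u \<in> V i" "k \<in> V i"
                        "j \<in> {1..r}" "{v,k} \<in> D j" "v \<in> V j" "k \<in> V j"
    | (dp) i b where "i \<in> {1..r}" "u \<in> V i" "k \<in> V i" "b \<in> {1..r}" "k = p b"
    | (pd) j b where "j \<in> {1..r}" "v \<in> V j" "k \<in> V j" "b \<in> {1..r}" "k = p b"
    | (pp) a1 c1 a2 c2 where "a1 \<in> {1..r}" "c1 \<in> {1..r}" "{a1,c1} \<in> DG" "u = p a1" "k = p c1"
          "a2 \<in> {1..r}" "c2 \<in> {1..r}" "{a2,c2} \<in> DG" "v = p a2" "k = p c2"
    using B_cases[OF eu] B_cases[OF ev] by blast
  then show ?thesis
  proof cases
    case dd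
    have ij: "i = j" using Vdisj dd by blast
    have kV: "p (i - 1) < k" using dd(4) unfolding V_def by simp
    have "k - p (i - 1) < u - p (i - 1)" "k - p (i - 1) < v - p (i - 1)" using kV ku kv by arith+
    then have lu: "label_ord (V i) k < label_ord (V i) u" and lv: "label_ord (V i) k < label_ord (V i) v"
      using Vlab[of k i] Vlab[of u i] Vlab[of v i] dd ij by auto
    have "{u,v} \<in> D i"
      using fill_closed[OF Vbij[OF dd(1)] dd(4) dd(3) _ uv lu lv] dd ij unfolding D_def by blast
    then show ?thesis unfolding B_def using dd by blast
  next
    case dp
    have "b = i" using port_in dp by blast
    then have "u \<le> k" using Vmax[OF dp(2)] dp by simp
    then show ?thesis using ku by simp
  next
    case pd
    have "b = j" using port_in pd by blast
    then have "v \<le> k" using Vmax[OF pd(2)] pd by simp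
    then show ?thesis using kv by simp
  next
    case pp
    have c: "c2 = c1" using pinj pp by auto
    have "c1 < a1"
    proof (rule ccontr)
      assume "\<not> c1 < a1" then have "p a1 \<le> p c1" using pmono_le pp by auto
      then show False using ku pp by simp
    qed
    moreover have "c1 < a2"
    proof (rule ccontr)
      assume "\<not> c1 < a2" then have "p a2 \<le> p c1" using pmono_le pp by auto
      then show False using kv pp c by simp
    qed
    moreover have "a1 \<noteq> a2" using uv pp by auto
    ultimately have "{a1,a2} \<in> DG"
      using fill_closed[OF Gbij pp(2) pp(1) pp(6), of E] pp c Glab unfolding DG_def by auto
    then show ?thesis unfolding B_def Ports_def using pp \<open>a1 \<noteq> a2\<close> by blast
  qed
qed

lemma Ft_B: "Ft \<subseteq> B"
proof
  fix e assume "e \<in> Ft"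
  then consider (a) i where "i \<in> {1..r}" "e \<in> Es i" | (b) i j where "i \<noteq> j" "{i,j} \<in> E" "e = {p i, p j}"
    unfolding Ft_def expanded_edges_def by blast
  then show "e \<in> B"
  proof cases
    case a
    then have "e \<in> D i" unfolding D_def fillD_def using fill_seq_mono[of 0] by fastforce
    then show ?thesis unfolding B_def using a by blast
  next
    case b
    obtain x y where "x \<in> {1..r}" "y \<in> {1..r}" "{i,j} = {x,y}"
      using Gsimple b unfolding simple_graph_def by blast
    then have ij: "i \<in> {1..r}" "j \<in> {1..r}" by (auto simp: doubleton_eq_iff)
    have "{i,j} \<in> DG" unfolding DG_def fillD_def using fill_seq_mono[of 0] b by fastforce
    then show ?thesis unfolding B_def Ports_def using ij b by blast
  qed
qed

lemma fillB: "fill_seq {1..p r} id Ft n \<subseteq> B"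
proof (induction n)
  case 0
  then show ?case using Ft_B by simp
next
  case (Suc n)
  show ?case
  proof
    fix e assume "e \<in> fill_seq {1..p r} id Ft (Suc n)"
    then have "e \<in> fill_step {1..p r} id (Suc n) (fill_seq {1..p r} id Ft n)" by simp
    from fill_stepD[OF this] show "e \<in> B"
    proof
      assume "e \<in> fill_seq {1..p r} id Ft n" then show ?thesis using Suc.IH by blast
    next
      assume "\<exists>u v. e = {u, v} \<and> u \<in> {1..p r} \<and> v \<in> {1..p r} \<and> u \<noteq> v \<and> id u > Suc n \<and> id v > Suc n \<and>
          {u, inv_into {1..p r} id (Suc n)} \<in> fill_seq {1..p r} id Ft n \<and>
          {v, inv_into {1..p r} id (Suc n)} \<in> fill_seq {1..p r} id Ft n"
      then obtain u v where uv: "e = {u, v}" "u \<in> {1..p r}" "v \<in> {1..p r}" "u \<noteq> v" "u > Suc n" "v > Suc n"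
          "{u, inv_into {1..p r} id (Suc n)} \<in> fill_seq {1..p r} id Ft n"
          "{v, inv_into {1..p r} id (Suc n)} \<in> fill_seq {1..p r} id Ft n" by auto
      have "Suc n \<in> {1..p r}" using uv by auto
      then have "inv_into {1..p r} id (Suc n) = Suc n" by (rule inv_into_id)
      moreover have "{u, inv_into {1..p r} id (Suc n)} \<in> B" "{v, inv_into {1..p r} id (Suc n)} \<in> B"
        using uv(7,8) Suc.IH by blast+
      ultimately have "{u, Suc n} \<in> B" "{v, Suc n} \<in> B" by simp_all
      then show ?thesis using Bclosed[of u v "Suc n"] uv by simp
    qed
  qed
qed

end

context expd begin

lemma mixed:
  assumes i: "i \<in> {1..r}" and x: "x \<in> V i" and y: "y \<in> V i" and xc: "x = p c" and c: "c \<in> {1..r}"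
    and zd: "z = p d" and d: "d \<in> {1..r}" and cd: "c \<noteq> d" and xy: "x \<noteq> y" and yz: "{y,z} \<in> B"
  shows False
proof -
  have ci: "c = i" using port_in c i x xc by blast
  from B_cases[OF yz] show False
  proof
    assume "\<exists>j\<in>{1..r}. {y,z} \<in> D j \<and> y \<in> V j \<and> z \<in> V j"
    then obtain j where j: "j \<in> {1..r}" "y \<in> V j" "z \<in> V j" by blast
    then have "j = i" using Vdisj i y by blast
    then have "d = i" using port_in d i j zd by blast
    then show False using ci cd by simp
  next
    assume "\<exists>a b. a \<in> {1..r} \<and> b \<in> {1..r} \<and> a \<noteq> b \<and> {a,b} \<in> DG \<and> y = p a \<and> z = p b"
    then obtain e where e: "e \<in> {1..r}" "y = p e" by blast
    then have "e = i" using port_in i y by blast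
    then show False using e xc ci xy by simp
  qed
qed

lemma triangle:
  assumes uv: "{u,v} \<in> B" and vw: "{v,w} \<in> B" and uw: "{u,w} \<in> B"
    and nuv: "{u,v} \<notin> Ft" and nvw: "{v,w} \<notin> Ft" and nuw: "{u,w} \<notin> Ft"
  shows False
proof -
  have d: "u \<noteq> v" "v \<noteq> w" "u \<noteq> w" using Bdist uv vw uw by auto
  have wu: "{w,u} \<in> B" and wv: "{w,v} \<in> B" and vu: "{v,u} \<in> B"
    using uw vw uv by (simp_all add: insert_commute)
  have EsFt: "Es i \<subseteq> Ft" if "i \<in> {1..r}" for i
    using that unfolding Ft_def expanded_edges_def by blast
  have EFt: "{p a, p b} \<in> Ft" if "a \<noteq> b" "{a,b} \<in> E" for a b
    using that unfolding Ft_def expanded_edges_def by blast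
  consider (D1) i where "i \<in> {1..r}" "{u,v} \<in> D i" "u \<in> V i" "v \<in> V i"
    | (P1) a b where "a \<in> {1..r}" "b \<in> {1..r}" "a \<noteq> b" "{a,b} \<in> DG" "u = p a" "v = p b"
    using B_cases[OF uv] by blast
  note c1 = this
  consider (D2) j where "j \<in> {1..r}" "{v,w} \<in> D j" "v \<in> V j" "w \<in> V j"
    | (P2) a' c where "a' \<in> {1..r}" "c \<in> {1..r}" "a' \<noteq> c" "{a',c} \<in> DG" "v = p a'" "w = p c"
    using B_cases[OF vw] by blast
  note c2 = this
  consider (D3) l where "l \<in> {1..r}" "{u,w} \<in> D l" "u \<in> V l" "w \<in> V l"
    | (P3) a'' c' where "a'' \<in> {1..r}" "c' \<in> {1..r}" "a'' \<noteq> c'" "{a'',c'} \<in> DG" "u = p a''" "w = p c'"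
    using B_cases[OF uw] by blast
  note c3 = this
  show False
  proof (cases rule: c1)
    case D1
    show False
    proof (cases rule: c2)
      case D2
      show False
      proof (cases rule: c3)
        case D3
        have ij: "j = i" using Vdisj D1 D2 by blast
        have il: "l = i" using Vdisj D1 D3 by blast
        have "\<not> (\<exists>u\<in>V i. \<exists>v\<in>V i. \<exists>w\<in>V i. {u,v} \<notin> Es i \<and> {v,w} \<notin> Es i \<and> {u,w} \<notin> Es i \<and>
          {u,v} \<in> D i \<and> {v,w} \<in> D i \<and> {u,w} \<in> D i)"
          using Vord[OF D1(1)] unfolding GB_ordering_def D_def by blast
        moreover have "{u,v} \<notin> Es i" "{v,w} \<notin> Es i" "{u,w} \<notin> Es i"
          using EsFt[OF D1(1)] nuv nvw nuw by auto
        ultimately show False using D1 D2 D3 ij il by blast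
      next
        case P3
        show False using mixed[OF D1(1) D1(3) D1(4) P3(5) P3(1) P3(6) P3(2) P3(3) d(1) vw] .
      qed
    next
      case P2
      show False using mixed[OF D1(1) D1(4) D1(3) P2(5) P2(1) P2(6) P2(2) P2(3) _ uw] d by blast
    qed
  next
    case P1
    show False
    proof (cases rule: c2)
      case D2
      show False using mixed[OF D2(1) D2(3) D2(4) P1(6) P1(2) P1(5) P1(1) _ d(2) wu] P1(3) by blast
    next
      case P2
      show False
      proof (cases rule: c3)
        case D3
        show False using mixed[OF D3(1) D3(3) D3(4) P1(5) P1(1) P1(6) P1(2) P1(3) d(3) wv] .
      next
        case P3
        have "a' = b" using pinj P1 P2 by auto
        moreover have "a'' = a" using pinj P1 P3 by auto
        moreover have "c' = c" using pinj P2 P3 by auto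
        ultimately have dg: "{a,b} \<in> DG" "{b,c} \<in> DG" "{a,c} \<in> DG" using P1 P2 P3 by auto
        have "{a,b} \<notin> E" using EFt[OF P1(3)] nuv P1 by auto
        moreover have "{b,c} \<notin> E" using EFt[of b c] P2 \<open>a' = b\<close> nvw by auto
        moreover have "{a,c} \<notin> E" using EFt[of a c] P3 \<open>a'' = a\<close> \<open>c' = c\<close> nuw by auto
        moreover have "\<not> (\<exists>u\<in>{1..r}. \<exists>v\<in>{1..r}. \<exists>w\<in>{1..r}. {u,v} \<notin> E \<and> {v,w} \<notin> E \<and> {u,w} \<notin> E \<and>
          {u,v} \<in> DG \<and> {v,w} \<in> DG \<and> {u,w} \<in> DG)"
          using G_ord unfolding GB_ordering_def DG_def by blast
        ultimately show False using dg P1 P2 by blast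
      qed
    qed
  qed
qed

lemma main: "GB_graph {1..p r} Ft"
proof -
  have sg: "simple_graph {1..p r} Ft"
    unfolding simple_graph_def
  proof (intro conjI ballI)
    show "finite {1..p r}" by simp
  next
    fix e assume "e \<in> Ft"
    then consider (a) i where "i \<in> {1..r}" "e \<in> Es i" | (b) i j where "i \<noteq> j" "{i,j} \<in> E" "e = {p i, p j}"
      unfolding Ft_def expanded_edges_def by blast
    then show "\<exists>u v. u \<noteq> v \<and> u \<in> {1..p r} \<and> v \<in> {1..p r} \<and> e = {u, v}"
    proof cases
      case a
      then obtain u v where "u \<noteq> v" "u \<in> V i" "v \<in> V i" "e = {u,v}"
        using Vsimple unfolding simple_graph_def by blast
      then show ?thesis using Vsub[OF a(1)] by blast
    next
      case b
      obtain x y where "x \<in> {1..r}" "y \<in> {1..r}" "{i,j} = {x,y}"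
        using Gsimple b unfolding simple_graph_def by blast
      then have ij: "i \<in> {1..r}" "j \<in> {1..r}" by (auto simp: doubleton_eq_iff)
      then have "p i \<noteq> p j" using pinj b by auto
      then show ?thesis using ppos ij b by blast
    qed
  qed
  have ord: "GB_ordering {1..p r} Ft id"
    unfolding GB_ordering_def
  proof (intro conjI)
    show "bij_betw id {1..p r} {1..card {1..p r}}" by simp
  next
    have sub: "fillD {1..p r} id Ft \<subseteq> B" unfolding fillD_def by (rule fillB)
    show "\<not> (\<exists>u\<in>{1..p r}. \<exists>v\<in>{1..p r}. \<exists>w\<in>{1..p r}. {u,v} \<notin> Ft \<and> {v,w} \<notin> Ft \<and> {u,w} \<notin> Ft \<and>
          {u,v} \<in> fillD {1..p r} id Ft \<and> {v,w} \<in> fillD {1..p r} id Ft \<and> {u,w} \<in> fillD {1..p r} id Ft)"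
      using triangle sub by blast
  qed
  show ?thesis unfolding GB_graph_def using sg ord by blast
qed

end

theorem theorem6:
  fixes r :: nat and E :: "nat set set" and p :: "nat \<Rightarrow> nat" and Es :: "nat \<Rightarrow> nat set set"
  assumes G: "GB_graph {1..r} E"
    and G_ord: "GB_ordering {1..r} E (label_ord {1..r})"
    and p0: "p 0 = 0"
    and p_mono: "\<And>i. i < r \<Longrightarrow> p i < p (Suc i)"
    and Gi: "\<And>i. i \<in> {1..r} \<Longrightarrow> GB_graph {p (i - 1) + 1..p i} (Es i)"
    and Gi_ord: "\<And>i. i \<in> {1..r} \<Longrightarrow>
                   GB_ordering {p (i - 1) + 1..p i} (Es i) (label_ord {p (i - 1) + 1..p i})"
  shows "GB_graph {1..p r} (expanded_edges r E p Es)"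
proof -
  interpret expd r E p Es
    by (rule expd.intro) (fact G G_ord p0 p_mono Gi Gi_ord)+
  show ?thesis using main unfolding Ft_def .
qed


end
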